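(* Consider a wave sequence $U_L\xrightarrow{S}U_M\xrightarrow{C}U_R$ with $U_L\neq U_R$, consisting of an admissible $S$-wave from $U_L$ to $U_M$ followed by an admissible $C$-wave from $U_M$ to $U_R$. This wave sequence is compatible if and only if $U_M\in\mathcal{R}\cup\mathcal{T}$ and $S^k(U_M)\le S_L\le 1$.
   Context: System: $\partial_t S+\partial_x f(S,C)=0$, $\partial_t[(S+\mathcal{A})C]+\partial_x[f(S,C)C]=0$, with $\mathcal{A}>0$ constant and states $U=(S,C)\in[0,1]^2$. The flux $f$ satisfies: (a) $f\in\mathscr{C}^2$, $f(0,C)=0$, $f(1,C)=1$, $\partial_Sf(0,C)=\partial_Sf(1,C)=0$; (b) for each $C$, $f(\cdot,C)$ is strictly increasing and S-shaped with a single inflection point (convex then concave); (c) $\partial_Cf>0$ for $0<S<1$. Eigenvalues: $\lambda_C(S,C)=f(S,C)/(S+\mathcal{A})$, $\lambda_S(S,C)=\partial_Sf(S,C)$. Transition curve $\mathcal{T}=\{\lambda_S=\lambda_C\}$, $\mathcal{L}=\{\lambda_S>\lambda_C\}$, $\mathcal{R}=\{\lambda_S<\lambda_C\}$; for each $C$, $\mathcal{T}$ contains exactly one point $(S^*(C),C)$ with $S^*(C)\in(0,1)$. For a state $U=(S,C)$, $S^k(U)$ denotes the value $S'\in[0,1]$, $S'\ne S$, with $\lambda_C(S',C)=\lambda_C(U)$ (it lies on the opposite side of $\mathcal{T}$ from $U$); $S^k(U)=+\infty$ if no such $S'$ exists, and $S^k(U)=S^*(C)$ if $S=S^*(C)$.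 An $S$-wave from $U_1$ to $U_2$ requires $C_1=C_2=C$ and is the solution of the scalar Riemann problem $\partial_tS+\partial_xf(S,C)=0$ with left state $S_1$, right state $S_2$, built from shocks satisfying Oleinik's entropy condition and rarefactions; its initial velocity $v_i$ and final velocity $v_f$ are the smallest and largest propagation speeds in that wave fan. A $C$-wave from $U_1$ to $U_2$ is a contact discontinuity with $\lambda_C(U_1)=\lambda_C(U_2)$, travelling with speed $v_i=v_f=\lambda_C(U_1)$; it is admissible iff $U_1,U_2$ both lie in $\mathcal{L}\cup\mathcal{T}$ or both in $\mathcal{R}\cup\mathcal{T}$. A sequence $U_1\xrightarrow{a}U_2\xrightarrow{b}U_3$ is compatible iff $v_f^a\le v_i^b$. *)

theory Defs
  imports "HOL-Analysis.Analysis"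
begin

definition C2_at :: "(real \<Rightarrow> real \<Rightarrow> real) \<Rightarrow> (real \<times> real) set \<Rightarrow> bool" where
  "C2_at f D \<longleftrightarrow>
     (\<exists>F' :: real \<times> real \<Rightarrow> ((real \<times> real) \<Rightarrow>\<^sub>L real).
      \<exists>F'' :: real \<times> real \<Rightarrow> ((real \<times> real) \<Rightarrow>\<^sub>L ((real \<times> real) \<Rightarrow>\<^sub>L real)).
        (\<forall>x\<in>D. ((\<lambda>p. f (fst p) (snd p)) has_derivative blinfun_apply (F' x)) (at x)) \<and>
        (\<forall>x\<in>D. (F' has_derivative blinfun_apply (F'' x)) (at x)) \<and>
        continuous_on D F' \<and> continuous_on D F'')"

definition strict_convex_on :: "real set \<Rightarrow> (real \<Rightarrow> real) \<Rightarrow> bool" where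
  "strict_convex_on S g \<longleftrightarrow>
     (\<forall>x\<in>S. \<forall>y\<in>S. \<forall>u::real. x \<noteq> y \<and> 0 < u \<and> u < 1 \<longrightarrow>
        g ((1 - u) * x + u * y) < (1 - u) * g x + u * g y)"

definition strict_concave_on :: "real set \<Rightarrow> (real \<Rightarrow> real) \<Rightarrow> bool" where
  "strict_concave_on S g \<longleftrightarrow> strict_convex_on S (\<lambda>x. - g x)"

definition lamS :: "(real \<Rightarrow> real \<Rightarrow> real) \<Rightarrow> real \<Rightarrow> real \<Rightarrow> real" where
  "lamS f S C = deriv (\<lambda>s. f s C) S"

definition dC :: "(real \<Rightarrow> real \<Rightarrow> real) \<Rightarrow> real \<Rightarrow> real \<Rightarrow> real" where
  "dC f S C = deriv (\<lambda>c. f S c) C"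

definition lamC :: "(real \<Rightarrow> real \<Rightarrow> real) \<Rightarrow> real \<Rightarrow> real \<Rightarrow> real \<Rightarrow> real" where
  "lamC f A S C = f S C / (S + A)"

definition flux_hyp :: "(real \<Rightarrow> real \<Rightarrow> real) \<Rightarrow> bool" where
  "flux_hyp f \<longleftrightarrow>
     C2_at f ({0..1} \<times> {0..1}) \<and>
     (\<forall>C\<in>{0..1}. f 0 C = 0 \<and> f 1 C = 1 \<and> lamS f 0 C = 0 \<and> lamS f 1 C = 0) \<and>
     (\<forall>C\<in>{0..1}. strict_mono_on {0..1} (\<lambda>S. f S C) \<and>
        (\<exists>s0\<in>{0<..<1}. strict_convex_on {0..s0} (\<lambda>S. f S C) \<and>
                        strict_concave_on {s0..1} (\<lambda>S. f S C))) \<and>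
     (\<forall>S\<in>{0<..<1}. \<forall>C\<in>{0..1}. dC f S C > 0)"

definition inL :: "(real \<Rightarrow> real \<Rightarrow> real) \<Rightarrow> real \<Rightarrow> real \<times> real \<Rightarrow> bool" where
  "inL f A U \<longleftrightarrow> lamS f (fst U) (snd U) > lamC f A (fst U) (snd U)"

definition inR :: "(real \<Rightarrow> real \<Rightarrow> real) \<Rightarrow> real \<Rightarrow> real \<times> real \<Rightarrow> bool" where
  "inR f A U \<longleftrightarrow> lamS f (fst U) (snd U) < lamC f A (fst U) (snd U)"

definition inT :: "(real \<Rightarrow> real \<Rightarrow> real) \<Rightarrow> real \<Rightarrow> real \<times> real \<Rightarrow> bool" where
  "inT f A U \<longleftrightarrow> lamS f (fst U) (snd U) = lamC f A (fst U) (snd U)"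

definition Sstar :: "(real \<Rightarrow> real \<Rightarrow> real) \<Rightarrow> real \<Rightarrow> real \<Rightarrow> real" where
  "Sstar f A C = (THE s. s \<in> {0<..<1} \<and> inT f A (s, C))"

definition Sk :: "(real \<Rightarrow> real \<Rightarrow> real) \<Rightarrow> real \<Rightarrow> real \<times> real \<Rightarrow> ereal" where
  "Sk f A U =
     (let S = fst U; C = snd U in
      if S = Sstar f A C then ereal (Sstar f A C)
      else if (\<exists>S'\<in>{0..1}. S' \<noteq> S \<and> lamC f A S' C = lamC f A S C)
      then ereal (THE S'. S' \<in> {0..1} \<and> S' \<noteq> S \<and> lamC f A S' C = lamC f A S C)
      else \<infinity>)"

text \<open>The Oleinik entropy
  solution of the scalar Riemann problem with left state a < right state b has
  the states s in [a,b] travelling with speeds given by the derivative of the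
  lower convex envelope (shocks = linear pieces, rarefactions = contact with g);
  for left state > right state the upper concave envelope is used.\<close>
definition lower_env :: "(real \<Rightarrow> real) \<Rightarrow> real \<Rightarrow> real \<Rightarrow> real \<Rightarrow> real" where
  "lower_env g a b s = Sup {m * s + c | m c. \<forall>x\<in>{a..b}. m * x + c \<le> g x}"

definition upper_env :: "(real \<Rightarrow> real) \<Rightarrow> real \<Rightarrow> real \<Rightarrow> real \<Rightarrow> real" where
  "upper_env g a b s = Inf {m * s + c | m c. \<forall>x\<in>{a..b}. g x \<le> m * x + c}"

definition one_sided_deriv :: "(real \<Rightarrow> real) \<Rightarrow> real \<Rightarrow> real set \<Rightarrow> real" where
  "one_sided_deriv E x I = (THE v. (E has_real_derivative v) (at x within I))"

text \<open>The initial velocity is the speed of the left state SL, the final velocity that of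
  the right state SR (these are the smallest and largest speeds in the fan).\<close>
definition Swave_speed :: "(real \<Rightarrow> real \<Rightarrow> real) \<Rightarrow> real \<Rightarrow> real \<Rightarrow> real \<Rightarrow> real \<Rightarrow> real" where
  "Swave_speed f C SL SR s =
     (if SL < SR then one_sided_deriv (lower_env (\<lambda>S. f S C) SL SR) s {SL..SR}
      else if SR < SL then one_sided_deriv (upper_env (\<lambda>S. f S C) SR SL) s {SR..SL}
      else lamS f SL C)"

definition Swave_vi :: "(real \<Rightarrow> real \<Rightarrow> real) \<Rightarrow> real \<times> real \<Rightarrow> real \<times> real \<Rightarrow> real" where
  "Swave_vi f U1 U2 = Swave_speed f (snd U1) (fst U1) (fst U2) (fst U1)"

definition Swave_vf :: "(real \<Rightarrow> real \<Rightarrow> real) \<Rightarrow> real \<times> real \<Rightarrow> real \<times> real \<Rightarrow> real" where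
  "Swave_vf f U1 U2 = Swave_speed f (snd U1) (fst U1) (fst U2) (fst U2)"

definition admissible_Swave :: "real \<times> real \<Rightarrow> real \<times> real \<Rightarrow> bool" where
  "admissible_Swave U1 U2 \<longleftrightarrow> snd U1 = snd U2"

definition Cwave_speed :: "(real \<Rightarrow> real \<Rightarrow> real) \<Rightarrow> real \<Rightarrow> real \<times> real \<Rightarrow> real" where
  "Cwave_speed f A U1 = lamC f A (fst U1) (snd U1)"

definition admissible_Cwave :: "(real \<Rightarrow> real \<Rightarrow> real) \<Rightarrow> real \<Rightarrow> real \<times> real \<Rightarrow> real \<times> real \<Rightarrow> bool" where
  "admissible_Cwave f A U1 U2 \<longleftrightarrow>
     lamC f A (fst U1) (snd U1) = lamC f A (fst U2) (snd U2) \<and>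
     (((inL f A U1 \<or> inT f A U1) \<and> (inL f A U2 \<or> inT f A U2)) \<or>
      ((inR f A U1 \<or> inT f A U1) \<and> (inR f A U2 \<or> inT f A U2)))"

definition compatible_SC :: "(real \<Rightarrow> real \<Rightarrow> real) \<Rightarrow> real \<Rightarrow> real \<times> real \<Rightarrow> real \<times> real \<Rightarrow> real \<times> real \<Rightarrow> bool" where
  "compatible_SC f A UL UM UR \<longleftrightarrow> Swave_vf f UL UM \<le> Cwave_speed f A UM"

end

theory Submission
  imports Defs
begin


lemma lower_env_deriv:
  fixes h :: "real \<Rightarrow> real"
  assumes ab: "a < b" and bnd: "\<forall>x\<in>{a..<b}. (h b - h x)/(b-x) \<le> M"
  defines "\<sigma> \<equiv> Sup ((\<lambda>x. (h b - h x)/(b-x)) ` {a..<b})"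
  shows "(lower_env h a b has_real_derivative \<sigma>) (at b within {a..b})"
    "one_sided_deriv (lower_env h a b) b {a..b} = \<sigma>"
proof -
  let ?K = "(\<lambda>x. (h b - h x)/(b-x)) ` {a..<b}"
  have ne: "?K \<noteq> {}" using ab by auto
  have bd: "bdd_above ?K" using bnd by (auto intro!: bdd_aboveI[of _ M])
  have ch: "(h b - h x)/(b-x) \<le> \<sigma>" if "x \<in> {a..<b}" for x
    unfolding \<sigma>_def using that bd by (auto intro!: cSup_upper)
  define L where "L y = {m * y + c | m c. \<forall>x\<in>{a..b}. m * x + c \<le> h x}" for y
  have E: "lower_env h a b y = Sup (L y)" for y unfolding lower_env_def L_def by simp
  have minor: "\<forall>x\<in>{a..b}. \<sigma> * x + (h b - \<sigma> * b) \<le> h x"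
  proof
    fix x assume x: "x \<in> {a..b}"
    show "\<sigma> * x + (h b - \<sigma> * b) \<le> h x"
    proof (cases "x = b")
      case False
      with x have "x \<in> {a..<b}" by auto
      from ch[OF this] have "(h b - h x) \<le> \<sigma> * (b - x)" using \<open>x\<in>{a..<b}\<close>
        by (auto simp: divide_le_eq mult.commute)
      then show ?thesis by (simp add: algebra_simps)
    qed simp
  qed
  have Lne: "\<sigma> * y + (h b - \<sigma> * b) \<in> L y" for y unfolding L_def using minor by blast
  have Lbd: "bdd_above (L y)" if "y \<in> {a..b}" for y
    unfolding L_def using that by (auto intro!: bdd_aboveI[of _ "h y"])
  have Elow: "lower_env h a b y \<ge> \<sigma> * y + (h b - \<sigma> * b)" if "y \<in> {a..b}" for y
    unfolding E using Lne Lbd[OF that] by (rule cSup_upper)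
  have Eupb: "lower_env h a b y \<le> ((b - y) * h x0 + (y - x0) * h b) / (b - x0)"
    if "x0 \<in> {a..<b}" "y \<in> {x0..b}" for x0 y
    unfolding E
  proof (rule cSup_least)
    show "L y \<noteq> {}" using Lne by blast
    fix z assume "z \<in> L y"
    then obtain m c where z: "z = m * y + c" and mc: "\<forall>x\<in>{a..b}. m * x + c \<le> h x"
      unfolding L_def by blast
    have h1: "m * x0 + c \<le> h x0" "m * b + c \<le> h b" using mc that ab by auto
    have pos: "b - x0 > 0" using that by auto
    have "(b - y) * (m * x0 + c) + (y - x0) * (m * b + c) \<le> (b - y) * h x0 + (y - x0) * h b"
      using that h1 by (intro add_mono mult_left_mono) auto
    moreover have "(b - y) * (m * x0 + c) + (y - x0) * (m * b + c) = z * (b - x0)"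
      unfolding z by (simp add: algebra_simps)
    ultimately show "z \<le> ((b - y) * h x0 + (y - x0) * h b) / (b - x0)"
      using pos by (simp add: le_divide_eq)
  qed
  have Eb: "lower_env h a b b = h b"
  proof -
    have "lower_env h a b b \<le> h b" using Eupb[of a b] ab by simp
    moreover have "lower_env h a b b \<ge> h b" using Elow[of b] ab by simp
    ultimately show ?thesis by simp
  qed
  show D: "(lower_env h a b has_real_derivative \<sigma>) (at b within {a..b})"
    unfolding has_field_derivative_iff tendsto_iff
  proof (intro allI impI)
    fix e :: real assume e: "e > 0"
    have "\<sigma> - e < Sup ?K" using e unfolding \<sigma>_def by simp
    then obtain x0 where x0: "x0 \<in> {a..<b}" and cx: "\<sigma> - e < (h b - h x0)/(b-x0)"
      using ne by (auto elim!: less_cSupE)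
    show "\<forall>\<^sub>F y in at b within {a..b}. dist ((lower_env h a b y - lower_env h a b b) / (y - b)) \<sigma> < e"
      unfolding eventually_at
    proof (intro exI[of _ "b - x0"] conjI ballI impI)
      show "b - x0 > 0" using x0 by auto
      fix y assume y: "y \<in> {a..b}" "y \<noteq> b \<and> dist y b < b - x0"
      then have yy: "x0 < y" "y < b" by (auto simp: dist_real_def)
      have q: "(lower_env h a b y - lower_env h a b b) / (y - b) = (h b - lower_env h a b y) / (b - y)"
        using yy Eb by (simp add: divide_simps) (simp add: algebra_simps)
      have up: "(h b - lower_env h a b y) / (b - y) \<le> \<sigma>"
        using Elow[OF y(1)] yy by (simp add: divide_le_eq algebra_simps)
      have lo1: "lower_env h a b y \<le> ((b - y) * h x0 + (y - x0) * h b) / (b - x0)"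
        using Eupb[OF x0] yy by auto
      have "(h b - h x0)/(b-x0) \<le> (h b - lower_env h a b y) / (b - y)"
      proof -
        have "h b - lower_env h a b y \<ge> h b - ((b - y) * h x0 + (y - x0) * h b) / (b - x0)"
          using lo1 by simp
        also have "h b - ((b - y) * h x0 + (y - x0) * h b) / (b - x0) = (b - y) * ((h b - h x0)/(b-x0))"
          using yy by (simp add: divide_simps) (simp add: algebra_simps)
        finally show ?thesis using yy by (simp add: le_divide_eq mult.commute)
      qed
      with cx up show "dist ((lower_env h a b y - lower_env h a b b) / (y - b)) \<sigma> < e"
        unfolding q dist_real_def by auto
    qed
  qed
  have nb: "at b within {a..b} \<noteq> bot"
    using ab by (simp add: trivial_limit_within islimpt_Icc)
  show "one_sided_deriv (lower_env h a b) b {a..b} = \<sigma>"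
    unfolding one_sided_deriv_def
    using D has_field_derivative_unique[OF _ D nb] by blast
qed

lemma upper_env_deriv:
  fixes h :: "real \<Rightarrow> real"
  assumes ab: "a < b" and bnd: "\<forall>x\<in>{a<..b}. (h x - h a)/(x-a) \<le> M"
  defines "\<sigma> \<equiv> Sup ((\<lambda>x. (h x - h a)/(x-a)) ` {a<..b})"
  shows "(upper_env h a b has_real_derivative \<sigma>) (at a within {a..b})"
    "one_sided_deriv (upper_env h a b) a {a..b} = \<sigma>"
proof -
  let ?K = "(\<lambda>x. (h x - h a)/(x-a)) ` {a<..b}"
  have ne: "?K \<noteq> {}" using ab by auto
  have bd: "bdd_above ?K" using bnd by (auto intro!: bdd_aboveI[of _ M])
  have ch: "(h x - h a)/(x-a) \<le> \<sigma>" if "x \<in> {a<..b}" for x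
    unfolding \<sigma>_def using that bd by (auto intro!: cSup_upper)
  define L where "L y = {m * y + c | m c. \<forall>x\<in>{a..b}. h x \<le> m * x + c}" for y
  have E: "upper_env h a b y = Inf (L y)" for y unfolding upper_env_def L_def by simp
  have major: "\<forall>x\<in>{a..b}. h x \<le> \<sigma> * x + (h a - \<sigma> * a)"
  proof
    fix x assume x: "x \<in> {a..b}"
    show "h x \<le> \<sigma> * x + (h a - \<sigma> * a)"
    proof (cases "x = a")
      case False
      with x have "x \<in> {a<..b}" by auto
      from ch[OF this] have "(h x - h a) \<le> \<sigma> * (x - a)" using \<open>x\<in>{a<..b}\<close>
        by (auto simp: divide_le_eq mult.commute)
      then show ?thesis by (simp add: algebra_simps)
    qed simp
  qed
  have Lne: "\<sigma> * y + (h a - \<sigma> * a) \<in> L y" for y unfolding L_def using major by blast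
  have Lbd: "bdd_below (L y)" if "y \<in> {a..b}" for y
    unfolding L_def using that by (auto intro!: bdd_belowI[of _ "h y"])
  have Eup: "upper_env h a b y \<le> \<sigma> * y + (h a - \<sigma> * a)" if "y \<in> {a..b}" for y
    unfolding E using Lne Lbd[OF that] by (rule cInf_lower)
  have Elob: "upper_env h a b y \<ge> ((x0 - y) * h a + (y - a) * h x0) / (x0 - a)"
    if "x0 \<in> {a<..b}" "y \<in> {a..x0}" for x0 y
    unfolding E
  proof (rule cInf_greatest)
    show "L y \<noteq> {}" using Lne by blast
    fix z assume "z \<in> L y"
    then obtain m c where z: "z = m * y + c" and mc: "\<forall>x\<in>{a..b}. h x \<le> m * x + c"
      unfolding L_def by blast
    have h1: "h a \<le> m * a + c" "h x0 \<le> m * x0 + c" using mc that ab by auto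
    have pos: "x0 - a > 0" using that by auto
    have "(x0 - y) * h a + (y - a) * h x0 \<le> (x0 - y) * (m * a + c) + (y - a) * (m * x0 + c)"
      using that h1 by (intro add_mono mult_left_mono) auto
    moreover have "(x0 - y) * (m * a + c) + (y - a) * (m * x0 + c) = z * (x0 - a)"
      unfolding z by (simp add: algebra_simps)
    ultimately show "((x0 - y) * h a + (y - a) * h x0) / (x0 - a) \<le> z"
      using pos by (simp add: divide_le_eq)
  qed
  have Ea: "upper_env h a b a = h a"
  proof -
    have "upper_env h a b a \<ge> h a" using Elob[of b a] ab by simp
    moreover have "upper_env h a b a \<le> h a" using Eup[of a] ab by simp
    ultimately show ?thesis by simp
  qed
  show D: "(upper_env h a b has_real_derivative \<sigma>) (at a within {a..b})"
    unfolding has_field_derivative_iff tendsto_iff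
  proof (intro allI impI)
    fix e :: real assume e: "e > 0"
    have "\<sigma> - e < Sup ?K" using e unfolding \<sigma>_def by simp
    then obtain x0 where x0: "x0 \<in> {a<..b}" and cx: "\<sigma> - e < (h x0 - h a)/(x0-a)"
      using ne by (auto elim!: less_cSupE)
    show "\<forall>\<^sub>F y in at a within {a..b}. dist ((upper_env h a b y - upper_env h a b a) / (y - a)) \<sigma> < e"
      unfolding eventually_at
    proof (intro exI[of _ "x0 - a"] conjI ballI impI)
      show "x0 - a > 0" using x0 by auto
      fix y assume y: "y \<in> {a..b}" "y \<noteq> a \<and> dist y a < x0 - a"
      then have yy: "a < y" "y < x0" by (auto simp: dist_real_def)
      have q: "(upper_env h a b y - upper_env h a b a) / (y - a) = (upper_env h a b y - h a) / (y - a)"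
        using Ea by simp
      have up: "(upper_env h a b y - h a) / (y - a) \<le> \<sigma>"
        using Eup[OF y(1)] yy by (simp add: divide_le_eq algebra_simps)
      have lo1: "upper_env h a b y \<ge> ((x0 - y) * h a + (y - a) * h x0) / (x0 - a)"
        using Elob[OF x0] yy by auto
      have "(h x0 - h a)/(x0-a) \<le> (upper_env h a b y - h a) / (y - a)"
      proof -
        have "upper_env h a b y - h a \<ge> ((x0 - y) * h a + (y - a) * h x0) / (x0 - a) - h a"
          using lo1 by simp
        also have "((x0 - y) * h a + (y - a) * h x0) / (x0 - a) - h a = (y - a) * ((h x0 - h a)/(x0-a))"
          using yy by (simp add: divide_simps) (simp add: algebra_simps)
        finally show ?thesis using yy by (simp add: le_divide_eq mult.commute)
      qed
      with cx up show "dist ((upper_env h a b y - upper_env h a b a) / (y - a)) \<sigma> < e"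
        unfolding q dist_real_def by auto
    qed
  qed
  have nb: "at a within {a..b} \<noteq> bot"
    using ab by (simp add: trivial_limit_within islimpt_Icc)
  show "one_sided_deriv (upper_env h a b) a {a..b} = \<sigma>"
    unfolding one_sided_deriv_def
    using D has_field_derivative_unique[OF _ D nb] by blast
qed



locale flx =
  fixes p d :: "real \<Rightarrow> real" and A sst :: real
  assumes A: "A > 0"
  and der: "\<And>s. s \<in> {0..1} \<Longrightarrow> (p has_real_derivative d s) (at s)"
  and cont: "continuous_on {0..1} d"
  and p0: "p 0 = 0" and p1: "p 1 = 1" and d1: "d 1 = 0"
  and mono: "strict_mono_on {0..1} p"
  and sst: "sst \<in> {0<..<1}" "d sst = p sst / (sst + A)"
  and uniq: "\<And>s. s \<in> {0<..<1} \<Longrightarrow> d s = p s / (s + A) \<Longrightarrow> s = sst"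
begin

definition g where "g s = p s / (s + A)"

lemma gder: assumes "s \<in> {0..1}" shows "(g has_real_derivative (d s - g s)/(s+A)) (at s)"
proof -
  have pos: "s + A > 0" using assms A by auto
  have "((\<lambda>x. p x / (x + A)) has_real_derivative (d s * (s + A) - p s * 1) / ((s + A) * (s + A))) (at s)"
    using pos by (intro DERIV_divide der assms derivative_eq_intros) auto
  moreover have "(d s * (s + A) - p s * 1) / ((s + A) * (s + A)) = (d s - g s)/(s+A)"
    using pos unfolding g_def by (simp add: divide_simps)
  ultimately show ?thesis unfolding g_def[abs_def] by simp
qed

lemma gcont: "continuous_on {a..b} g" if "0 \<le> a" "b \<le> 1"
  using that by (intro continuous_at_imp_continuous_on ballI DERIV_isCont[OF gder]) auto

lemma pcont: "continuous_on {a..b} p" if "0 \<le> a" "b \<le> 1"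
  using that by (intro continuous_at_imp_continuous_on ballI DERIV_isCont[OF der]) auto

lemma hcont: "continuous_on {a..b} (\<lambda>s. d s - g s)" if "0 \<le> a" "b \<le> 1"
  using that by (intro continuous_intros gcont continuous_on_subset[OF cont]) auto

lemma ppos: "s \<in> {0<..1} \<Longrightarrow> p s > 0"
  using mono p0 unfolding strict_mono_on_def by (metis atLeastAtMost_iff greaterThanAtMost_iff less_eq_real_def order_refl zero_le_one)

lemma gpos: "s \<in> {0<..1} \<Longrightarrow> g s > 0"
  using ppos A unfolding g_def by auto

lemma g0: "g 0 = 0" unfolding g_def p0 by simp

lemma h_pos: assumes s: "s \<in> {0<..<sst}" shows "d s > g s"
proof -
  have s1: "sst < 1" "0 < sst" using sst by auto
  have dd: "\<And>x. 0 \<le> x \<Longrightarrow> x \<le> sst \<Longrightarrow> (g has_real_derivative (d x - g x)/(x+A)) (at x)"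
    using s1 by (intro gder) auto
  obtain z where z: "0 < z" "z < sst" "g sst - g 0 = (sst - 0) * ((d z - g z)/(z+A))"
    using MVT2[of 0 sst g "\<lambda>s. (d s - g s)/(s+A)", OF s1(2) dd] by blast
  have "g sst > 0" using gpos s1 by auto
  with z g0 have "(sst - 0) * ((d z - g z)/(z+A)) > 0" by simp
  then have "(d z - g z)/(z+A) > 0" using s1 by (metis diff_zero zero_less_mult_pos)
  then have hz: "d z - g z > 0" using A z by (simp add: zero_less_divide_iff)
  show ?thesis
  proof (rule ccontr)
    assume "\<not> g s < d s"
    then have hs: "d s - g s \<le> 0" by simp
    have "\<exists>x. min s z \<le> x \<and> x \<le> max s z \<and> d x - g x = 0"
    proof (cases "s \<le> z")
      case True
      have c: "continuous_on {s..z} (\<lambda>s. d s - g s)" using s z s1 by (intro hcont) auto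
      obtain x where "s \<le> x" "x \<le> z" "d x - g x = 0"
        using IVT'[of "\<lambda>s. d s - g s" s 0 z, OF hs _ True c] hz by auto
      then show ?thesis using True by (intro exI[of _ x]) auto
    next
      case False
      have c: "continuous_on {z..s} (\<lambda>s. d s - g s)" using s z s1 by (intro hcont) auto
      obtain x where "z \<le> x" "x \<le> s" "d x - g x = 0"
        using IVT2'[of "\<lambda>s. d s - g s" s 0 z, OF hs _ _ c] hz False by auto
      then show ?thesis using False by (intro exI[of _ x]) auto
    qed
    then obtain x where x: "min s z \<le> x" "x \<le> max s z" "d x - g x = 0" by blast
    have "x \<in> {0<..<1}" "x < sst" using x s z s1 by auto
    with uniq[of x] x(3) show False unfolding g_def by auto
  qed
qed

lemma h_neg: assumes s: "s \<in> {sst<..1}" shows "d s < g s"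
proof (rule ccontr)
  assume "\<not> d s < g s"
  then have hs: "0 \<le> d s - g s" by simp
  have s1: "sst < 1" "0 < sst" using sst by auto
  have h1: "d 1 - g 1 \<le> 0" using d1 gpos[of 1] by auto
  have h1': "d 1 - g 1 \<noteq> 0" using d1 gpos[of 1] by auto
  have c: "continuous_on {s..1} (\<lambda>s. d s - g s)" using s s1 by (intro hcont) auto
  have s1': "s \<le> 1" using s by auto
  obtain x where x: "s \<le> x" "x \<le> 1" "d x - g x = 0"
    using IVT2'[of "\<lambda>s. d s - g s" 1 0 s, OF h1 hs s1' c] by blast
  then have "x \<noteq> 1" using h1' by auto
  then have "x \<in> {0<..<1}" using x s s1 by auto
  with uniq[of x] x s show False unfolding g_def by auto
qed

lemma ginc: assumes "x < y" "0 \<le> x" "y \<le> sst" shows "g x < g y"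
proof (rule DERIV_pos_imp_increasing_open[OF assms(1)])
  fix t assume t: "x < t" "t < y"
  have "t \<in> {0..1}" using t assms sst by auto
  moreover have "d t - g t > 0" using h_pos[of t] t assms by auto
  ultimately show "\<exists>y. (g has_real_derivative y) (at t) \<and> y > 0"
    using gder A t assms by (intro exI[of _ "(d t - g t)/(t+A)"]) auto
next
  show "continuous_on {x..y} g" using assms sst by (intro gcont) auto
qed

lemma gdec: assumes "x < y" "sst \<le> x" "y \<le> 1" shows "g y < g x"
proof -
  have "g x > g y"
  proof (rule DERIV_neg_imp_decreasing_open[OF assms(1)])
    fix t assume t: "x < t" "t < y"
    have "t \<in> {0..1}" using t assms sst by auto
    moreover have "d t - g t < 0" using h_neg[of t] t assms by auto
    ultimately show "\<exists>y. (g has_real_derivative y) (at t) \<and> y < 0"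
      using gder A t assms sst by (intro exI[of _ "(d t - g t)/(t+A)"]) (auto simp: divide_neg_pos)
  next
    show "continuous_on {x..y} g" using assms sst by (intro gcont) auto
  qed
  then show ?thesis by simp
qed

lemma chord_bound: "\<exists>B. \<forall>x\<in>{0..1}. \<forall>y\<in>{0..1}. x < y \<longrightarrow> \<bar>(p y - p x)/(y-x)\<bar> \<le> B"
proof -
  have "compact (d ` {0..1})" by (intro compact_continuous_image cont) auto
  then obtain B where B: "\<forall>t\<in>{0..1}. \<bar>d t\<bar> \<le> B"
    using compact_imp_bounded bounded_iff by (metis image_eqI real_norm_def)
  show ?thesis
  proof (intro exI[of _ B] ballI impI)
    fix x y :: real assume xy: "x \<in> {0..1}" "y \<in> {0..1}" "x < y"
    obtain z where z: "x < z" "z < y" "p y - p x = (y - x) * d z"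
      using MVT2[of x y p d] der xy by auto
    have "(p y - p x)/(y-x) = d z" using z xy by simp
    then show "\<bar>(p y - p x)/(y-x)\<bar> \<le> B" using B z xy by auto
  qed
qed


definition Skl where
  "Skl s = (if s = sst then ereal sst
            else if (\<exists>s'\<in>{0..1}. s' \<noteq> s \<and> g s' = g s)
            then ereal (THE s'. s' \<in> {0..1} \<and> s' \<noteq> s \<and> g s' = g s) else \<infinity>)"

definition vf where
  "vf a s = (if a < s then one_sided_deriv (lower_env p a s) s {a..s}
             else if s < a then one_sided_deriv (upper_env p s a) s {s..a} else d a)"

lemma Skl_sst: "Skl sst = ereal sst" unfolding Skl_def by simp

lemma Skl_0: "Skl 0 = \<infinity>"
proof -
  have "0 \<noteq> sst" using sst by auto
  moreover have "\<not> (\<exists>s'\<in>{0..1}. s' \<noteq> 0 \<and> g s' = g 0)"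
  proof
    assume "\<exists>s'\<in>{0..1}. s' \<noteq> 0 \<and> g s' = g 0"
    then obtain t where t: "t \<in> {0..1}" "t \<noteq> 0" "g t = g 0" by blast
    then have "t \<in> {0<..1}" by auto
    from gpos[OF this] t(3) g0 show False by simp
  qed
  ultimately show ?thesis unfolding Skl_def by simp
qed

lemma Skl_R: assumes s: "s \<in> {sst<..1}"
  shows "\<exists>s'. Skl s = ereal s' \<and> 0 \<le> s' \<and> s' < sst \<and> g s' = g s"
proof -
  have s1: "sst < 1" "0 < sst" using sst by auto
  have ss: "sst < s" "s \<le> 1" using s by auto
  have gs: "g s < g sst" using gdec[of sst s] ss by auto
  have g0s: "g 0 \<le> g s" using g0 gpos[of s] ss s1 by auto
  have gsl: "g s \<le> g sst" using gs by simp
  have c: "continuous_on {0..sst} g" using s1 by (intro gcont) auto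
  obtain s' where s': "0 \<le> s'" "s' \<le> sst" "g s' = g s"
    using IVT'[of g 0 "g s" sst, OF g0s gsl _ c] s1 by auto
  have "s' \<noteq> sst" using s'(3) gs by auto
  then have s'': "s' < sst" using s'(2) by linarith
  have P: "s' \<in> {0..1} \<and> s' \<noteq> s \<and> g s' = g s" using s' s'' s1 ss by auto
  have U: "t = s'" if t: "t \<in> {0..1} \<and> t \<noteq> s \<and> g t = g s" for t
  proof -
    have t1: "0 \<le> t" "t \<le> 1" "t \<noteq> s" "g t = g s" using t by auto
    have "t < sst"
    proof (rule ccontr)
      assume "\<not> t < sst"
      then have ts: "sst \<le> t" by simp
      show False
      proof (cases "t < s")
        case True then have "g s < g t" using gdec[of t s] ts ss by blast
        then show ?thesis using t1 by simp
      next
        case False then have "s < t" using t1 by auto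
        then have "g t < g s" using gdec[of s t] t1 ss by simp
        then show ?thesis using t1 by simp
      qed
    qed
    show "t = s'"
    proof (rule ccontr)
      assume "t \<noteq> s'"
      then consider "t < s'" | "s' < t" by linarith
      then show False
      proof cases
        case 1 then have "g t < g s'" using ginc[of t s'] t1 s'' by simp
        then show False using t1 s' by simp
      next
        case 2 then have "g s' < g t" using ginc[of s' t] s' \<open>t < sst\<close> by simp
        then show False using t1 s' by simp
      qed
    qed
  qed
  have ex: "\<exists>s'\<in>{0..1}. s' \<noteq> s \<and> g s' = g s" using P by blast
  have "(THE t. t \<in> {0..1} \<and> t \<noteq> s \<and> g t = g s) = s'"
    by (rule the_equality) (rule P, rule U)
  moreover have "s \<noteq> sst" using ss by auto
  ultimately have "Skl s = ereal s'" unfolding Skl_def using ex by presburger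
  then show ?thesis using s' s'' by blast
qed

lemma cinc: assumes as: "a < s" "0 \<le> a" "s \<le> 1"
  shows "vf a s \<le> g s \<longleftrightarrow> (\<forall>x\<in>{a..<s}. g s \<le> g x)"
proof -
  obtain B where B: "\<forall>x\<in>{0..1}. \<forall>y\<in>{0..1}. x < y \<longrightarrow> \<bar>(p y - p x)/(y-x)\<bar> \<le> B"
    using chord_bound by blast
  have bnd: "\<forall>x\<in>{a..<s}. (p s - p x)/(s-x) \<le> B"
  proof
    fix x assume x: "x \<in> {a..<s}"
    then have "x \<in> {0..1}" "s \<in> {0..1}" "x < s" using as by auto
    then have "\<bar>(p s - p x)/(s-x)\<bar> \<le> B" using B by blast
    then show "(p s - p x)/(s-x) \<le> B" by (rule abs_le_D1)
  qed
  have "vf a s = one_sided_deriv (lower_env p a s) s {a..s}" unfolding vf_def using as(1) by simp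
  also have "\<dots> = Sup ((\<lambda>x. (p s - p x)/(s-x)) ` {a..<s})" by (rule lower_env_deriv(2)[OF as(1) bnd])
  finally have v: "vf a s = Sup ((\<lambda>x. (p s - p x)/(s-x)) ` {a..<s})" .
  have bd: "bdd_above ((\<lambda>x. (p s - p x)/(s-x)) ` {a..<s})" using bnd by (auto intro!: bdd_aboveI[of _ B])
  have ne: "(\<lambda>x. (p s - p x)/(s-x)) ` {a..<s} \<noteq> {}" using as by auto
  have eq: "((p s - p x)/(s-x) \<le> g s) = (g s \<le> g x)" if x: "x \<in> {a..<s}" for x
  proof -
    have xp: "s - x > 0" "x + A > 0" "s + A > 0" using x as A by auto
    have "(p s - p x)/(s-x) \<le> g s \<longleftrightarrow> (p s - p x) * (s + A) \<le> p s * (s - x)"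
      using xp unfolding g_def by (simp add: divide_simps)
    also have "\<dots> \<longleftrightarrow> p s * (x + A) \<le> p x * (s + A)" by (simp add: algebra_simps)
    also have "\<dots> \<longleftrightarrow> g s \<le> g x" using xp unfolding g_def by (simp add: divide_simps)
    finally show ?thesis .
  qed
  have "vf a s \<le> g s \<longleftrightarrow> (\<forall>x\<in>{a..<s}. (p s - p x)/(s-x) \<le> g s)"
    unfolding v cSup_le_iff[OF ne bd] by simp
  also have "\<dots> \<longleftrightarrow> (\<forall>x\<in>{a..<s}. g s \<le> g x)" by (rule ball_cong[OF refl eq])
  finally show ?thesis .
qed

lemma cdec: assumes as: "s < a" "0 \<le> s" "a \<le> 1"
  shows "vf a s \<le> g s \<longleftrightarrow> (\<forall>x\<in>{s<..a}. g x \<le> g s)"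
proof -
  obtain B where B: "\<forall>x\<in>{0..1}. \<forall>y\<in>{0..1}. x < y \<longrightarrow> \<bar>(p y - p x)/(y-x)\<bar> \<le> B"
    using chord_bound by blast
  have bnd: "\<forall>x\<in>{s<..a}. (p x - p s)/(x-s) \<le> B"
  proof
    fix x assume x: "x \<in> {s<..a}"
    then have "s \<in> {0..1}" "x \<in> {0..1}" "s < x" using as by auto
    then have "\<bar>(p x - p s)/(x-s)\<bar> \<le> B" using B by blast
    then show "(p x - p s)/(x-s) \<le> B" by (rule abs_le_D1)
  qed
  have "vf a s = one_sided_deriv (upper_env p s a) s {s..a}" unfolding vf_def using as(1) by simp
  also have "\<dots> = Sup ((\<lambda>x. (p x - p s)/(x-s)) ` {s<..a})" by (rule upper_env_deriv(2)[OF as(1) bnd])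
  finally have v: "vf a s = Sup ((\<lambda>x. (p x - p s)/(x-s)) ` {s<..a})" .
  have bd: "bdd_above ((\<lambda>x. (p x - p s)/(x-s)) ` {s<..a})" using bnd by (auto intro!: bdd_aboveI[of _ B])
  have ne: "(\<lambda>x. (p x - p s)/(x-s)) ` {s<..a} \<noteq> {}" using as by auto
  have eq: "((p x - p s)/(x-s) \<le> g s) = (g x \<le> g s)" if x: "x \<in> {s<..a}" for x
  proof -
    have xp: "x - s > 0" "x + A > 0" "s + A > 0" using x as A by auto
    have "(p x - p s)/(x-s) \<le> g s \<longleftrightarrow> (p x - p s) * (s + A) \<le> p s * (x - s)"
      using xp unfolding g_def by (simp add: divide_simps)
    also have "\<dots> \<longleftrightarrow> p x * (s + A) \<le> p s * (x + A)" by (simp add: algebra_simps)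
    also have "\<dots> \<longleftrightarrow> g x \<le> g s" using xp unfolding g_def by (simp add: divide_simps)
    finally show ?thesis .
  qed
  have "vf a s \<le> g s \<longleftrightarrow> (\<forall>x\<in>{s<..a}. (p x - p s)/(x-s) \<le> g s)"
    unfolding v cSup_le_iff[OF ne bd] by simp
  also have "\<dots> \<longleftrightarrow> (\<forall>x\<in>{s<..a}. g x \<le> g s)" by (rule ball_cong[OF refl eq])
  finally show ?thesis .
qed

lemma main: assumes a: "0 \<le> a" "a \<le> 1" and s: "0 \<le> s" "s \<le> 1" and ne: "a \<noteq> s"
  shows "vf a s \<le> g s \<longleftrightarrow> (d s \<le> g s \<and> Skl s \<le> ereal a)"
proof -
  have s1: "0 < sst" "sst < 1" using sst by auto
  have dsst: "d sst = g sst" using sst(2) unfolding g_def by simp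
  show ?thesis
  proof (cases "a < s")
    case True
    note C = cinc[OF True a(1) s(2)]
    consider "s < sst" | "s = sst" | "sst < s" by linarith
    then show ?thesis
    proof cases
      case 1
      have "g a < g s" using ginc[of a s] True a 1 by simp
      then have "\<not> vf a s \<le> g s" unfolding C using True by force
      moreover have "d s > g s" using h_pos[of s] 1 True a by simp
      ultimately show ?thesis by simp
    next
      case 2
      have "g a < g s" using ginc[of a s] True a 2 by simp
      then have "\<not> vf a s \<le> g s" unfolding C using True by force
      moreover have "\<not> Skl s \<le> ereal a" using 2 True Skl_sst by simp
      ultimately show ?thesis by simp
    next
      case 3
      obtain s' where s': "Skl s = ereal s'" "0 \<le> s'" "s' < sst" "g s' = g s"
        using Skl_R[of s] 3 s by auto
      have ds: "d s < g s" using h_neg[of s] 3 s by simp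
      show ?thesis
      proof (cases "s' \<le> a")
        case True2: True
        have "\<forall>x\<in>{a..<s}. g s \<le> g x"
        proof
          fix x assume x: "x \<in> {a..<s}"
          show "g s \<le> g x"
          proof (cases "x \<le> sst")
            case True
            show ?thesis
            proof (cases "s' = x")
              case False
              then have "g s' < g x" using ginc[of s' x] x True2 True s' by simp
              then show ?thesis using s' by simp
            qed (use s' in simp)
          next
            case False
            then show ?thesis using gdec[of x s] x s by simp
          qed
        qed
        then show ?thesis unfolding C using ds s' True2 by simp
      next
        case False
        then have "g a < g s'" using ginc[of a s'] a s' by simp
        then have "\<not> vf a s \<le> g s" unfolding C using True s' by force
        then show ?thesis using s' False by simp
      qed
    qed
  next
    case False
    then have sa: "s < a" using ne by simp
    note C = cdec[OF sa s(1) a(2)]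
    show ?thesis
    proof (cases "sst \<le> s")
      case True
      have "\<forall>x\<in>{s<..a}. g x \<le> g s"
      proof
        fix x assume x: "x \<in> {s<..a}"
        then show "g x \<le> g s" using gdec[of s x] True a by simp
      qed
      then have L: "vf a s \<le> g s" unfolding C .
      show ?thesis
      proof (cases "s = sst")
        case True
        then show ?thesis using L dsst Skl_sst sa by simp
      next
        case False
        then have s3: "sst < s" using True by simp
        obtain s' where s': "Skl s = ereal s'" "0 \<le> s'" "s' < sst" "g s' = g s"
          using Skl_R[of s] s3 s by auto
        have ds: "d s < g s" using h_neg[of s] s3 s by simp
        show ?thesis using L ds s' s3 sa by simp
      qed
    next
      case False
      then have s3: "s < sst" by simp
      define x where "x = min a sst"
      have x: "x \<in> {s<..a}" "x \<le> sst" using sa s3 unfolding x_def by auto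
      have "g s < g x" using ginc[of s x] x s by simp
      then have L: "\<not> vf a s \<le> g s" unfolding C using x by force
      show ?thesis
      proof (cases "s = 0")
        case True
        then show ?thesis using L Skl_0 by simp
      next
        case False
        then have "d s > g s" using h_pos[of s] s s3 by simp
        then show ?thesis using L by simp
      qed
    qed
  qed
qed

end

theorem lemma3p2:
  fixes f :: "real \<Rightarrow> real \<Rightarrow> real" and A :: real
    and UL UM UR :: "real \<times> real"
  assumes A_pos: "A > 0"
    and flux: "flux_hyp f"
    and Tcurve: "\<forall>C\<in>{0..1}. \<exists>!s. s \<in> {0<..<1} \<and> inT f A (s, C)"
    and states: "UL \<in> {0..1} \<times> {0..1}" "UM \<in> {0..1} \<times> {0..1}" "UR \<in> {0..1} \<times> {0..1}"
    and Swave: "admissible_Swave UL UM" and Snontriv: "fst UL \<noteq> fst UM"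
    and Cwave: "admissible_Cwave f A UM UR"
    and LR: "UL \<noteq> UR"
  shows "compatible_SC f A UL UM UR \<longleftrightarrow>
           ((inR f A UM \<or> inT f A UM) \<and> Sk f A UM \<le> ereal (fst UL) \<and> fst UL \<le> 1)"
proof -
  obtain a C where UL: "UL = (a, C)" by (cases UL)
  obtain s C' where UM: "UM = (s, C')" by (cases UM)
  have CC: "C' = C" using Swave UL UM unfolding admissible_Swave_def by simp
  have a01: "0 \<le> a" "a \<le> 1" and C01: "C \<in> {0..1}" using states(1) UL by auto
  have s01: "0 \<le> s" "s \<le> 1" using states(2) UM by auto
  have as: "a \<noteq> s" using Snontriv UL UM by simp
  let ?D = "{0..1::real} \<times> {0..1::real}"
  from flux have "C2_at f ?D" unfolding flux_hyp_def by blast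
  then obtain F' :: "real \<times> real \<Rightarrow> ((real \<times> real) \<Rightarrow>\<^sub>L real)" where
    FD: "\<forall>x\<in>?D. ((\<lambda>p. f (fst p) (snd p)) has_derivative blinfun_apply (F' x)) (at x)"
    and Fc: "continuous_on ?D F'"
    unfolding C2_at_def by blast
  define p where "p = (\<lambda>x. f x C)"
  define d where "d = (\<lambda>x. blinfun_apply (F' (x, C)) (1, 0))"
  have der: "(p has_real_derivative d x) (at x)" if x: "x \<in> {0..1}" for x
  proof -
    have xD: "(x, C) \<in> ?D" using x C01 by auto
    have h1: "((\<lambda>t. (t, C)) has_derivative (\<lambda>h. (h, 0))) (at x)"
      by (intro has_derivative_Pair has_derivative_ident has_derivative_const)
    have h2: "((\<lambda>p. f (fst p) (snd p)) has_derivative blinfun_apply (F' (x, C))) (at ((\<lambda>t. (t, C)) x))"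
      using FD xD by simp
    have "(((\<lambda>p. f (fst p) (snd p)) \<circ> (\<lambda>t. (t, C))) has_derivative (blinfun_apply (F' (x, C)) \<circ> (\<lambda>h. (h, 0)))) (at x)"
      by (rule diff_chain_at[OF h1 h2])
    moreover have "((\<lambda>p. f (fst p) (snd p)) \<circ> (\<lambda>t. (t, C))) = p" unfolding p_def by (simp add: o_def)
    moreover have "(blinfun_apply (F' (x, C)) \<circ> (\<lambda>h. (h, 0))) = (*) (d x)"
    proof
      fix h :: real
      have "(h, 0::real) = h *\<^sub>R (1, 0)" by simp
      then have "blinfun_apply (F' (x, C)) (h, 0) = h *\<^sub>R blinfun_apply (F' (x, C)) (1, 0)"
        by (metis blinfun.scaleR_right)
      then show "(blinfun_apply (F' (x, C)) \<circ> (\<lambda>h. (h, 0))) h = d x * h"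
        unfolding d_def by simp
    qed
    ultimately show ?thesis unfolding has_field_derivative_def by simp
  qed
  have cont: "continuous_on {0..1} d"
  proof -
    have c1: "continuous_on {0..1} (\<lambda>x. F' (x, C))"
      by (rule continuous_on_compose2[OF Fc]) (use C01 in \<open>auto intro!: continuous_intros\<close>)
    show ?thesis unfolding d_def
      by (rule blinfun.continuous_on[OF c1 continuous_on_const])
  qed
  have lamS_eq: "lamS f x C = d x" if "x \<in> {0..1}" for x
    unfolding lamS_def using DERIV_imp_deriv[OF der[OF that]] unfolding p_def by simp
  have fl: "f 0 C = 0 \<and> f 1 C = 1 \<and> lamS f 0 C = 0 \<and> lamS f 1 C = 0"
    using flux C01 unfolding flux_hyp_def by blast
  have mono: "strict_mono_on {0..1} p"
    using flux C01 unfolding flux_hyp_def p_def by blast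
  have inT_eq: "inT f A (x, C) \<longleftrightarrow> d x = p x / (x + A)" if "x \<in> {0..1}" for x
    unfolding inT_def lamC_def p_def using lamS_eq[OF that] by simp
  from Tcurve C01 have ex1: "\<exists>!s. s \<in> {0<..<1} \<and> inT f A (s, C)" by blast
  define sst where "sst = Sstar f A C"
  have sstP: "sst \<in> {0<..<1} \<and> inT f A (sst, C)"
    unfolding sst_def Sstar_def by (rule theI'[OF ex1])
  have sst2: "d sst = p sst / (sst + A)" using sstP inT_eq[of sst] by auto
  have uniq: "x = sst" if "x \<in> {0<..<1}" "d x = p x / (x + A)" for x
  proof -
    have "inT f A (x, C)" using that inT_eq[of x] by auto
    then show ?thesis using ex1 sstP that(1) by blast
  qed
  interpret flx p d A sst
  proof
    show "A > 0" by (rule A_pos)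
    show "\<And>s. s \<in> {0..1} \<Longrightarrow> (p has_real_derivative d s) (at s)" by (rule der)
    show "continuous_on {0..1} d" by (rule cont)
    show "p 0 = 0" "p 1 = 1" using fl unfolding p_def by auto
    show "d 1 = 0" using fl lamS_eq[of 1] by auto
    show "strict_mono_on {0..1} p" by (rule mono)
    show "sst \<in> {0<..<1}" using sstP by blast
    show "d sst = p sst / (sst + A)" by (rule sst2)
    show "\<And>s. s \<in> {0<..<1} \<Longrightarrow> d s = p s / (s + A) \<Longrightarrow> s = sst" by (rule uniq)
  qed
  have lamC_eq: "lamC f A x C = g x" for x unfolding lamC_def g_def by (simp add: p_def)
  have comp: "compatible_SC f A UL UM UR \<longleftrightarrow> vf a s \<le> g s"
  proof -
    have "Swave_vf f UL UM = vf a s"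
      using as unfolding Swave_vf_def Swave_speed_def vf_def UL UM CC by (auto simp: p_def)
    moreover have "Cwave_speed f A UM = g s" unfolding Cwave_speed_def UM CC by (simp add: lamC_eq)
    ultimately show ?thesis unfolding compatible_SC_def by simp
  qed
  have RT: "(inR f A UM \<or> inT f A UM) \<longleftrightarrow> d s \<le> g s"
    unfolding inR_def inT_def UM CC using lamS_eq[of s] s01 lamC_eq by auto
  have SK: "Sk f A UM = Skl s"
    unfolding Sk_def Skl_def UM CC Let_def by (simp add: lamC_eq sst_def) blast
  show ?thesis unfolding comp RT SK using main[OF a01 s01 as] a01 UL by simp
qed

end
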